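(* Let $q$ be an odd prime power, $d\ge1$, $Q=q^d$, $n\ge 1$, and let $L(x)$ be an $\mathbb{F}_Q$-linearized polynomial. For the quadratic form $x\mapsto \mathrm{Tr}_{\mathbb{F}_{Q^n}/\mathbb{F}_Q}(xL(x))$ over $\mathbb{F}_Q$, write its number of zeros in $\mathbb{F}_{Q^n}$ as $Q^{n-1}+\lambda(Q-1)Q^{\frac{n+w}{2}-1}$, and for the quadratic form $x\mapsto \mathrm{Tr}_{\mathbb{F}_{q^{dn}}/\mathbb{F}_q}(xL(x))$ over $\mathbb{F}_q$ (on the same field $\mathbb{F}_{q^{dn}}=\mathbb{F}_{Q^n}$), write its number of zeros as $q^{dn-1}+\lambda'(q-1)q^{\frac{dn+w'}{2}-1}$. If $\lambda\neq 0$, then $\lambda'=\lambda$.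
   Context: An $\mathbb{F}_Q$-linearized polynomial is one of the form $\sum_i c_i x^{Q^i}$ with $c_i$ in a finite extension of $\mathbb{F}_Q$ (here the $x\mapsto xL(x)$ traces are assumed to define quadratic forms over the respective base fields). For a quadratic form $F$ over a finite field $k$ of odd characteristic on a finite-dimensional $k$-space $V$, its radical is $\{x\in V: F(x+y)-F(x)-F(y)=0\ \forall y\in V\}$; if $\dim_k V=N$ and the radical has $k$-dimension $w$, the number of zeros of $F$ in $V$ equals $|k|^{N-1}+\lambda(|k|-1)|k|^{\frac{N+w}{2}-1}$ for a unique $\lambda\in\{-1,0,1\}$ (the sign), with $\lambda=0$ exactly when $N-w$ is odd. Above, $w$ and $w'$ are the radical dimensions over $\mathbb{F}_Q$ and $\mathbb{F}_q$ respectively. *)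

theory Defs
  imports "HOL-Computational_Algebra.Primes" "HOL-Library.Cardinality" Complex_Main
begin

text \<open>The finite field F_{Q^n} = F_{q^{dn}} is modelled as a finite field type 'a of
  cardinality q^(d*n). Frobenius-type trace from 'a down to the subfield of order Q
  (fixed field of x \<mapsto> x^Q): Tr(x) = sum_{i<n} x^(Q^i).\<close>

definition frob_trace :: "nat \<Rightarrow> nat \<Rightarrow> 'a::field \<Rightarrow> 'a" where
  "frob_trace Q n x = (\<Sum>i<n. x ^ (Q ^ i))"

definition linearized :: "nat \<Rightarrow> (nat \<Rightarrow> 'a::field) \<Rightarrow> nat \<Rightarrow> 'a \<Rightarrow> 'a" where
  "linearized Q c m x = (\<Sum>i<m. c i * x ^ (Q ^ i))"

definition qf_radical :: "('a::ab_group_add \<Rightarrow> 'b::ab_group_add) \<Rightarrow> 'a set" where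
  "qf_radical F = {x. \<forall>y. F (x + y) - F x - F y = 0}"

definition prime_power :: "nat \<Rightarrow> bool" where
  "prime_power q \<longleftrightarrow> (\<exists>p k. prime p \<and> k \<ge> 1 \<and> q = p ^ k)"

end

theory Submission
  imports Defs "HOL-Library.FuncSet" "HOL-Computational_Algebra.Polynomial"
begin


locale kfield =
  fixes K :: "'a::{finite,field} set"
  assumes K0: "0 \<in> K" and K1: "1 \<in> K"
    and Kadd: "a \<in> K \<Longrightarrow> b \<in> K \<Longrightarrow> a + b \<in> K"
    and Kmul: "a \<in> K \<Longrightarrow> b \<in> K \<Longrightarrow> a * b \<in> K"
    and Kneg: "a \<in> K \<Longrightarrow> - a \<in> K"
    and Kinv: "a \<in> K \<Longrightarrow> inverse a \<in> K"
    and two: "(2::'a) \<noteq> 0"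
begin

lemma Kdiff: "a \<in> K \<Longrightarrow> b \<in> K \<Longrightarrow> a - b \<in> K"
  using Kadd Kneg by (metis diff_conv_add_uminus)
lemma Kdiv: "a \<in> K \<Longrightarrow> b \<in> K \<Longrightarrow> a / b \<in> K"
  using Kmul Kinv by (metis divide_inverse)
lemma Ksq: "a \<in> K \<Longrightarrow> a^2 \<in> K"
  using Kmul by (simp add: power2_eq_square)
lemma K2: "2 \<in> K" using Kadd K1 by (metis one_add_one)
lemma finK: "finite K" by simp

definition "Sq = (\<lambda>t. t^2) ` (K - {0})"

lemma sq_eq: "(t::'a)^2 = s^2 \<longleftrightarrow> t = s \<or> t = - s"
proof -
  have "t^2 = s^2 \<longleftrightarrow> (t - s) * (t + s) = 0" by (simp add: power2_eq_square algebra_simps)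
  also have "\<dots> \<longleftrightarrow> t = s \<or> t = - s" by (simp add: eq_neg_iff_add_eq_0)
  finally show ?thesis .
qed

lemma neg_ne: "t \<noteq> 0 \<Longrightarrow> t \<noteq> - (t::'a)"
proof
  assume "t \<noteq> 0" "t = - t"
  then have "2 * t = 0" by (metis mult_2 add.right_inverse)
  with two \<open>t\<noteq>0\<close> show False by simp
qed

lemma card_Sq: "2 * card Sq + 1 = card K"
proof -
  have fib: "card {t \<in> K - {0}. t^2 = y} = 2" if "y \<in> Sq" for y
  proof -
    from that obtain t0 where t0: "t0 \<in> K - {0}" "y = t0^2" unfolding Sq_def by auto
    have "{t \<in> K - {0}. t^2 = y} = {t0, - t0}"
      using t0 Kneg sq_eq[of _ t0] by auto
    moreover have "t0 \<noteq> - t0" using neg_ne t0 by auto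
    ultimately show ?thesis by simp
  qed
  have e1: "K - {0} = (\<Union>y\<in>Sq. {t \<in> K - {0}. t^2 = y})" unfolding Sq_def by auto
  have e2: "card (\<Union>y\<in>Sq. {t \<in> K - {0}. t^2 = y}) = (\<Sum>y\<in>Sq. card {t \<in> K - {0}. t^2 = y})"
    by (rule card_UN_disjoint) auto
  have "card (K - {0}) = (\<Sum>y\<in>Sq. card {t \<in> K - {0}. t^2 = y})" using e1 e2 by (simp only:)
  also have "\<dots> = 2 * card Sq" using fib by simp
  finally have "card (K - {0}) = 2 * card Sq" .
  moreover have "card K \<ge> 1" using K0 by (metis card_0_eq empty_iff finK less_one not_le)
  ultimately show ?thesis using K0 by (simp add: card_Diff_singleton)
qed

lemma card_sqs: "2 * card ((\<lambda>t. t^2) ` K) = card K + 1"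
proof -
  have "(\<lambda>t. t^2) ` K = insert 0 Sq" using K0 unfolding Sq_def by auto
  moreover have "0 \<notin> Sq" unfolding Sq_def by auto
  ultimately show ?thesis using card_Sq by (simp add: finite_code)
qed

lemma card_K_ge: "card K \<ge> 3"
proof -
  have "card {0::'a, 1} \<le> card K" using K0 K1 by (intro card_mono) auto
  then have "card K \<ge> 2" by simp
  with card_Sq show ?thesis by presburger
qed

lemma nonsq_exists: "\<exists>\<nu>\<in>K - {0}. \<nu> \<notin> Sq"
proof (rule ccontr)
  assume "\<not> ?thesis"
  then have "K - {0} \<subseteq> Sq" by auto
  then have "card (K - {0}) \<le> card Sq" by (intro card_mono) auto
  with card_Sq card_K_ge K0 show False by (simp add: card_Diff_singleton)
qed

lemma Sq_sub: "Sq \<subseteq> K - {0}" unfolding Sq_def using Ksq by auto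

lemma two_classes:
  assumes "\<nu> \<in> K - {0}" "\<nu> \<notin> Sq" "x \<in> K - {0}"
  shows "x \<in> Sq \<or> x / \<nu> \<in> Sq"
proof -
  have inj: "inj_on (\<lambda>s. \<nu> * s) Sq" using assms by (auto intro: inj_onI)
  have disj: "Sq \<inter> (\<lambda>s. \<nu> * s) ` Sq = {}"
  proof (rule ccontr)
    assume "\<not> ?thesis"
    then obtain a b where ab: "a \<in> K - {0}" "b \<in> K - {0}" "a^2 = \<nu> * b^2" unfolding Sq_def by auto
    then have "\<nu> = (a / b)^2" by (simp add: power_divide)
    moreover have "a / b \<in> K - {0}" using ab Kdiv by auto
    ultimately show False using assms(2) unfolding Sq_def by auto
  qed
  have sub: "Sq \<union> (\<lambda>s. \<nu> * s) ` Sq \<subseteq> K - {0}" using Sq_sub assms Kmul by auto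
  have "card (Sq \<union> (\<lambda>s. \<nu> * s) ` Sq) = card Sq + card Sq"
    using disj inj card_Un_disjoint[of Sq "(\<lambda>s. \<nu> * s) ` Sq"] card_image[OF inj] by (simp add: finite_code)
  also have "\<dots> = card (K - {0})" using card_Sq K0 by (simp add: card_Diff_singleton)
  finally have "Sq \<union> (\<lambda>s. \<nu> * s) ` Sq = K - {0}"
    using sub by (intro card_subset_eq) (auto simp: finite_code)
  with assms(3) have "x \<in> Sq \<or> x \<in> (\<lambda>s. \<nu> * s) ` Sq" by blast
  then show ?thesis using assms(1) by auto
qed

lemma pigeon:
  assumes "c \<in> K - {0}" "e \<in> K - {0}" "d \<in> K"
  shows "\<exists>s\<in>K. \<exists>t\<in>K. c * s^2 + e * t^2 = d"
proof -
  define A where "A = (\<lambda>y. c * y) ` ((\<lambda>t. t^2) ` K)"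
  define B where "B = (\<lambda>y. d - e * y) ` ((\<lambda>t. t^2) ` K)"
  have "card A = card ((\<lambda>t. t^2) ` K)" unfolding A_def using assms(1)
    by (intro card_image inj_onI) auto
  moreover have "card B = card ((\<lambda>t. t^2) ` K)" unfolding B_def using assms(2)
    by (intro card_image inj_onI) auto
  moreover have "A \<union> B \<subseteq> K" unfolding A_def B_def using assms Kmul Kdiff Ksq by auto
  then have "card (A \<union> B) \<le> card K" by (intro card_mono) auto
  moreover have "card A + card B = card (A \<union> B) + card (A \<inter> B)"
    by (rule card_Un_Int) auto
  ultimately have "card (A \<inter> B) > 0" using card_sqs by linarith
  then obtain y where "y \<in> A" "y \<in> B" by (metis card_gt_0_iff disjoint_iff)
  then obtain s t where st: "s \<in> K" "t \<in> K" "c * s^2 = d - e * t^2" unfolding A_def B_def by auto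
  then show ?thesis by (intro bexI[of _ s] bexI[of _ t]) (auto simp: algebra_simps)
qed


definition "G c c1 a = card {p \<in> K \<times> K. c * (fst p)^2 + c1 * (snd p)^2 = a}"

lemma G_scale:
  assumes "r \<in> K - {0}"
  shows "G c c1 (r^2 * a) = G c c1 a"
proof -
  have "bij_betw (\<lambda>p. (r * fst p, r * snd p))
      {p \<in> K \<times> K. c * (fst p)^2 + c1 * (snd p)^2 = a}
      {p \<in> K \<times> K. c * (fst p)^2 + c1 * (snd p)^2 = r^2 * a}"
  proof (rule bij_betwI[where g = "\<lambda>p. (fst p / r, snd p / r)"])
    show "(\<lambda>p. (r * fst p, r * snd p)) \<in> {p \<in> K \<times> K. c * (fst p)^2 + c1 * (snd p)^2 = a}
      \<rightarrow> {p \<in> K \<times> K. c * (fst p)^2 + c1 * (snd p)^2 = r^2 * a}"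
      using assms Kmul by (auto simp: power_mult_distrib algebra_simps)
    show "(\<lambda>p. (fst p / r, snd p / r)) \<in> {p \<in> K \<times> K. c * (fst p)^2 + c1 * (snd p)^2 = r^2 * a}
      \<rightarrow> {p \<in> K \<times> K. c * (fst p)^2 + c1 * (snd p)^2 = a}"
    proof
      fix p assume p: "p \<in> {p \<in> K \<times> K. c * (fst p)^2 + c1 * (snd p)^2 = r^2 * a}"
      have "r^2 * (c * (fst p / r)^2 + c1 * (snd p / r)^2) = c * (fst p)^2 + c1 * (snd p)^2"
        using assms by (simp add: power_divide field_simps)
      then have "r^2 * (c * (fst p / r)^2 + c1 * (snd p / r)^2) = r^2 * a" using p by simp
      then have "c * (fst p / r)^2 + c1 * (snd p / r)^2 = a" using assms by simp
      then show "(fst p / r, snd p / r) \<in> {p \<in> K \<times> K. c * (fst p)^2 + c1 * (snd p)^2 = a}"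
        using p assms Kdiv by auto
    qed
  qed (use assms in auto)
  from bij_betw_same_card[OF this] show ?thesis unfolding G_def by simp
qed

lemma G_sim:
  assumes c: "c \<in> K - {0}" and c1: "c1 \<in> K - {0}" and nu: "\<nu> \<in> K - {0}"
  shows "G c c1 (\<nu> * a) = G c c1 a"
proof -
  obtain \<alpha> \<beta> where ab: "\<alpha> \<in> K" "\<beta> \<in> K" "c * \<alpha>^2 + c1 * \<beta>^2 = c * \<nu>"
    using pigeon[OF c c1, of "c * \<nu>"] c nu Kmul by auto
  define e where "e = c1 / c"
  have eK: "e \<in> K" using c c1 Kdiv e_def by auto
  have c1e: "c1 = c * e" using c e_def by auto
  have nue: "\<nu> = \<alpha>^2 + e * \<beta>^2" using ab(3) c unfolding c1e
    by (metis (no_types, lifting) Diff_iff distrib_left mult.assoc mult_left_cancel singletonI)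
  define f where "f = (\<lambda>p. (\<alpha> * fst p - e * \<beta> * snd p, \<beta> * fst p + \<alpha> * snd p))"
  define g where "g = (\<lambda>p. ((\<alpha> * fst p + e * \<beta> * snd p) / \<nu>, (\<alpha> * snd p - \<beta> * fst p) / \<nu>))"
  have phif: "c * (fst (f p))^2 + c1 * (snd (f p))^2 = \<nu> * (c * (fst p)^2 + c1 * (snd p)^2)" for p
    unfolding f_def c1e nue by (simp add: power2_eq_square algebra_simps)
  have nz: "\<nu> \<noteq> 0" using nu by auto
  have fg: "f (g p) = p" for p
  proof (cases p)
    case (Pair a b)
    have 1: "\<alpha> * ((\<alpha> * a + e * \<beta> * b) / \<nu>) - e * \<beta> * ((\<alpha> * b - \<beta> * a) / \<nu>)
        = (\<alpha> * (\<alpha> * a + e * \<beta> * b) - e * \<beta> * (\<alpha> * b - \<beta> * a)) / \<nu>"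
      by (simp add: diff_divide_distrib add_divide_distrib right_diff_distrib distrib_left)
    have 2: "\<alpha> * (\<alpha> * a + e * \<beta> * b) - e * \<beta> * (\<alpha> * b - \<beta> * a) = \<nu> * a"
      unfolding nue by (simp add: power2_eq_square algebra_simps)
    have 3: "\<beta> * ((\<alpha> * a + e * \<beta> * b) / \<nu>) + \<alpha> * ((\<alpha> * b - \<beta> * a) / \<nu>)
        = (\<beta> * (\<alpha> * a + e * \<beta> * b) + \<alpha> * (\<alpha> * b - \<beta> * a)) / \<nu>"
      by (simp add: diff_divide_distrib add_divide_distrib right_diff_distrib distrib_left)
    have 4: "\<beta> * (\<alpha> * a + e * \<beta> * b) + \<alpha> * (\<alpha> * b - \<beta> * a) = \<nu> * b"
      unfolding nue by (simp add: power2_eq_square algebra_simps)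
    show ?thesis unfolding f_def g_def Pair using 1 2 3 4 nz by simp
  qed
  have gf: "g (f p) = p" for p
  proof (cases p)
    case (Pair a b)
    have 2: "\<alpha> * (\<alpha> * a - e * \<beta> * b) + e * \<beta> * (\<beta> * a + \<alpha> * b) = \<nu> * a"
      unfolding nue by (simp add: power2_eq_square algebra_simps)
    have 4: "\<alpha> * (\<beta> * a + \<alpha> * b) - \<beta> * (\<alpha> * a - e * \<beta> * b) = \<nu> * b"
      unfolding nue by (simp add: power2_eq_square algebra_simps)
    show ?thesis unfolding f_def g_def Pair using 2 4 nz by simp
  qed
  have fK: "p \<in> K \<times> K \<Longrightarrow> f p \<in> K \<times> K" for p
    unfolding f_def using ab eK Kmul Kadd Kdiff by (auto simp: mem_Times_iff)
  have gK: "p \<in> K \<times> K \<Longrightarrow> g p \<in> K \<times> K" for p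
    unfolding g_def using ab eK nu Kmul Kadd Kdiff Kdiv by (auto simp: mem_Times_iff)
  have "bij_betw f {p \<in> K \<times> K. c * (fst p)^2 + c1 * (snd p)^2 = a}
      {p \<in> K \<times> K. c * (fst p)^2 + c1 * (snd p)^2 = \<nu> * a}"
  proof (rule bij_betwI[where g = g])
    show "f \<in> {p \<in> K \<times> K. c * (fst p)^2 + c1 * (snd p)^2 = a}
      \<rightarrow> {p \<in> K \<times> K. c * (fst p)^2 + c1 * (snd p)^2 = \<nu> * a}"
      using phif fK by auto
    show "g \<in> {p \<in> K \<times> K. c * (fst p)^2 + c1 * (snd p)^2 = \<nu> * a}
      \<rightarrow> {p \<in> K \<times> K. c * (fst p)^2 + c1 * (snd p)^2 = a}"
    proof
      fix p assume p: "p \<in> {p \<in> K \<times> K. c * (fst p)^2 + c1 * (snd p)^2 = \<nu> * a}"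
      have "\<nu> * (c * (fst (g p))^2 + c1 * (snd (g p))^2) = \<nu> * a"
        using phif[of "g p"] fg[of p] p by simp
      then have "c * (fst (g p))^2 + c1 * (snd (g p))^2 = a" using nu by simp
      then show "g p \<in> {p \<in> K \<times> K. c * (fst p)^2 + c1 * (snd p)^2 = a}" using gK p by auto
    qed
  qed (use fg gf in auto)
  from bij_betw_same_card[OF this] show ?thesis unfolding G_def by simp
qed

lemma G_const:
  assumes c: "c \<in> K - {0}" and c1: "c1 \<in> K - {0}" and a: "a \<in> K - {0}" and b: "b \<in> K - {0}"
  shows "G c c1 b = G c c1 a"
proof -
  obtain \<nu> where nu: "\<nu> \<in> K - {0}" "\<nu> \<notin> Sq" using nonsq_exists by auto
  have ba: "b / a \<in> K - {0}" using a b Kdiv by auto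
  from two_classes[OF nu ba] show ?thesis
  proof
    assume "b / a \<in> Sq"
    then obtain r where r: "r \<in> K - {0}" "b / a = r^2" unfolding Sq_def by auto
    then have "b = r^2 * a" using a by (simp add: field_simps)
    then show ?thesis using G_scale[OF r(1)] by simp
  next
    assume "b / a / \<nu> \<in> Sq"
    then obtain r where r: "r \<in> K - {0}" "b / a / \<nu> = r^2" unfolding Sq_def by auto
    then have "b = \<nu> * (r^2 * a)" using a nu by (simp add: field_simps)
    then show ?thesis using G_scale[OF r(1)] G_sim[OF c c1 nu(1)] by simp
  qed
qed

end


lemma card_bij_filter:
  assumes "bij_betw \<phi> A W"
  shows "card {x \<in> W. P x} = card {p \<in> A. P (\<phi> p)}"
proof -
  have "{x \<in> W. P x} = \<phi> ` {p \<in> A. P (\<phi> p)}" using assms unfolding bij_betw_def by auto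
  moreover have "inj_on \<phi> {p \<in> A. P (\<phi> p)}" using assms unfolding bij_betw_def
    by (auto intro: inj_on_subset)
  ultimately show ?thesis by (simp add: card_image)
qed

lemma card_prod_filter:
  assumes "finite A" "finite B"
  shows "card {p \<in> A \<times> B. P (fst p) (snd p)} = (\<Sum>a\<in>A. card {b \<in> B. P a b})"
proof -
  have "{p \<in> A \<times> B. P (fst p) (snd p)} = Sigma A (\<lambda>a. {b \<in> B. P a b})" by auto
  then show ?thesis using assms by (simp add: card_SigmaI)
qed

locale qform = kfield K for K :: "'a::{finite,field} set" +
  fixes F :: "'a \<Rightarrow> 'a"
  assumes FK: "F x \<in> K"
    and Fscale: "t \<in> K \<Longrightarrow> F (t * x) = t^2 * F x"
    and Badd0: "F (x + y + z) - F (x + y) - F z = (F (x + z) - F x - F z) + (F (y + z) - F y - F z)"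
    and Bscale0: "t \<in> K \<Longrightarrow> F (t * x + y) - F (t * x) - F y = t * (F (x + y) - F x - F y)"
begin

definition "B x y = F (x + y) - F x - F y"

lemma B_sym: "B x y = B y x" unfolding B_def by (simp add: add.commute)
lemma B_add1: "B (x + y) z = B x z + B y z" unfolding B_def by (rule Badd0)
lemma B_add2: "B z (x + y) = B z x + B z y" using B_add1 B_sym by metis
lemma B_scale1: "t \<in> K \<Longrightarrow> B (t * x) y = t * B x y" unfolding B_def by (rule Bscale0)
lemma B_scale2: "t \<in> K \<Longrightarrow> B y (t * x) = t * B y x" using B_scale1 B_sym by metis
lemma BK: "B x y \<in> K" unfolding B_def using FK Kdiff by auto
lemma F0: "F 0 = 0" using Fscale[OF K0, of 0] by simp
lemma F_add: "F (x + y) = F x + F y + B x y" unfolding B_def by simp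
lemma B_self: "B x x = 2 * F x"
proof -
  have e: "2 * x = x + x" by (rule mult_2)
  have "F (2 * x) = 2^2 * F x" by (rule Fscale[OF K2])
  then have "F (x + x) = 2^2 * F x" by (simp only: e)
  then have "B x x = 2^2 * F x - F x - F x" by (simp only: B_def)
  then show ?thesis by algebra
qed
lemma F_neg: "F (- x) = F x" using Fscale[OF Kneg[OF K1], of x] by simp

definition "subsp W \<longleftrightarrow> 0 \<in> W \<and> (\<forall>x\<in>W. \<forall>y\<in>W. x + y \<in> W) \<and> (\<forall>t\<in>K. \<forall>x\<in>W. t * x \<in> W)"

lemma subspD:
  assumes "subsp W"
  shows "0 \<in> W" "x \<in> W \<Longrightarrow> y \<in> W \<Longrightarrow> x + y \<in> W" "t \<in> K \<Longrightarrow> x \<in> W \<Longrightarrow> t * x \<in> W"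
  using assms unfolding subsp_def by auto

lemma subsp_diff: "subsp W \<Longrightarrow> x \<in> W \<Longrightarrow> y \<in> W \<Longrightarrow> x - y \<in> W"
  using subspD[of W] Kneg[OF K1] by (metis diff_conv_add_uminus mult_minus1)

lemma subsp_perp:
  assumes "subsp W"
  shows "subsp {x \<in> W. B u x = 0}"
proof -
  have "B u 0 = 0" unfolding B_def using F0 by simp
  moreover have "B u x = 0 \<Longrightarrow> B u y = 0 \<Longrightarrow> B u (x + y) = 0" for x y using B_add2 by simp
  moreover have "t \<in> K \<Longrightarrow> B u x = 0 \<Longrightarrow> B u (t * x) = 0" for t x using B_scale2 by simp
  ultimately show ?thesis using assms unfolding subsp_def by auto
qed

definition "N W a = card {x \<in> W. F x = a}"

lemma split1:
  assumes W: "subsp W" and x0: "x0 \<in> W" and c: "F x0 \<noteq> 0"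
  shows "bij_betw (\<lambda>p. fst p * x0 + snd p) (K \<times> {x \<in> W. B x0 x = 0}) W"
    and "\<And>s w. B x0 w = 0 \<Longrightarrow> s \<in> K \<Longrightarrow> F (s * x0 + w) = s^2 * F x0 + F w"
proof -
  define c where "c = F x0"
  have c2: "2 * c \<noteq> 0" using c two unfolding c_def by simp
  have c2K: "2 * c \<in> K" using K2 FK Kmul c_def by auto
  show Fs: "F (s * x0 + w) = s^2 * F x0 + F w" if "B x0 w = 0" "s \<in> K" for s w
    using that F_add[of "s * x0" w] B_scale1[of s x0 w] Fscale by simp
  define r where "r = (\<lambda>x. B x0 x / (2 * c))"
  have rK: "r x \<in> K" for x unfolding r_def using BK c2K Kdiv by auto
  show "bij_betw (\<lambda>p. fst p * x0 + snd p) (K \<times> {x \<in> W. B x0 x = 0}) W"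
  proof (rule bij_betwI[where g = "\<lambda>x. (r x, x - r x * x0)"])
    show "(\<lambda>p. fst p * x0 + snd p) \<in> K \<times> {x \<in> W. B x0 x = 0} \<rightarrow> W"
      using subspD[OF W] x0 by auto
    show "(\<lambda>x. (r x, x - r x * x0)) \<in> W \<rightarrow> K \<times> {x \<in> W. B x0 x = 0}"
    proof
      fix x assume x: "x \<in> W"
      have "B x0 (x - r x * x0) = B x0 x - r x * B x0 x0"
        using B_add2[of x0 x "- (r x * x0)"] B_scale2[OF Kneg[OF rK[of x]], of x0 x0] by simp
      also have "\<dots> = 0" unfolding r_def B_self c_def[symmetric] using c2 by simp
      finally show "(r x, x - r x * x0) \<in> K \<times> {x \<in> W. B x0 x = 0}"
        using rK subsp_diff[OF W x] subspD(3)[OF W rK x0] by auto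
    qed
    show "(\<lambda>p. fst p * x0 + snd p) (r x, x - r x * x0) = x" for x by simp
    fix p assume p: "p \<in> K \<times> {x \<in> W. B x0 x = 0}"
    have "B x0 (fst p * x0 + snd p) = fst p * (2 * c)"
      using p B_add2[of x0 "fst p * x0" "snd p"] B_scale2[of "fst p" x0 x0] B_self c_def by (auto simp: mem_Times_iff)
    then have "r (fst p * x0 + snd p) = fst p" unfolding r_def using c2 by simp
    then show "(\<lambda>x. (r x, x - r x * x0)) ((\<lambda>p. fst p * x0 + snd p) p) = p" by simp
  qed
qed

end


context kfield begin

lemma hyp_count:
  assumes "c \<in> K"
  shows "card {q \<in> K \<times> K. fst q * snd q = c} = (if c = 0 then 2 * card K - 1 else card K - 1)"
proof (cases "c = 0")
  case True
  have "{q \<in> K \<times> K. fst q * snd q = c} = ({0::'a} \<times> K) \<union> (K \<times> {0::'a})" using True K0 by auto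
  moreover have "card ({0::'a} \<times> K) + card (K \<times> {0::'a}) = card (({0::'a} \<times> K) \<union> (K \<times> {0::'a})) + card (({0::'a} \<times> K) \<inter> (K \<times> {0::'a}))"
    by (rule card_Un_Int) auto
  moreover have "({0::'a} \<times> K) \<inter> (K \<times> {0::'a}) = {(0::'a, 0::'a)}" using K0 by auto
  moreover have "card ({0::'a} \<times> K) = card K" "card (K \<times> {0::'a}) = card K" by (simp_all add: card_cartesian_product)
  ultimately show ?thesis using True by simp
next
  case False
  have "bij_betw (\<lambda>s. (s, c / s)) (K - {0}) {q \<in> K \<times> K. fst q * snd q = c}"
    by (rule bij_betwI[where g = fst]) (use False assms Kdiv in auto)
  from bij_betw_same_card[OF this] False K0 show ?thesis by (simp add: card_Diff_singleton)
qed

end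

context qform begin

lemma B_neg2: "B z (- x) = - B z x"
  using B_scale2[OF Kneg[OF K1], of z x] by simp
lemma B_diff2: "B z (x - y) = B z x - B z y"
  using B_add2[of z x "- y"] B_neg2[of z y] by simp
lemma B_lin2: "a \<in> K \<Longrightarrow> B z (x - a * y) = B z x - a * B z y"
  using B_diff2 B_scale2 by simp

lemma split_hyp:
  assumes W: "subsp W" and u: "u \<in> W" and v: "v \<in> W" and Fu: "F u = 0" and Fv: "F v = 0"
    and Buv: "B u v = 1"
  defines "W' \<equiv> {x \<in> {x \<in> W. B u x = 0}. B v x = 0}"
  shows "bij_betw (\<lambda>p. fst (snd p) * u + snd (snd p) * v + fst p) (W' \<times> (K \<times> K)) W"
    and "\<And>s t w. s \<in> K \<Longrightarrow> t \<in> K \<Longrightarrow> w \<in> W' \<Longrightarrow> F (s * u + t * v + w) = s * t + F w"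
    and "subsp W'"
proof -
  show "subsp W'" unfolding W'_def by (intro subsp_perp W)
  have Buu: "B u u = 0" using B_self Fu by simp
  have Bvv: "B v v = 0" using B_self Fv by simp
  have Bvu: "B v u = 1" using Buv B_sym by metis
  show Fst: "F (s * u + t * v + w) = s * t + F w" if st: "s \<in> K" "t \<in> K" and w: "w \<in> W'" for s t w
  proof -
    have w0: "B u w = 0" "B v w = 0" using w unfolding W'_def by auto
    have "F (s * u + t * v + w) = F (s * u) + F (t * v) + B (s * u) (t * v) + F w + B (s * u + t * v) w"
      by (simp add: F_add)
    also have "B (s * u + t * v) w = 0" using w0 B_add1 B_scale1 st by simp
    also have "B (s * u) (t * v) = s * t" using B_scale1[OF st(1)] B_scale2[OF st(2)] Buv by simp
    also have "F (s * u) = 0" using Fscale[OF st(1)] Fu by simp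
    also have "F (t * v) = 0" using Fscale[OF st(2)] Fv by simp
    finally show ?thesis by simp
  qed
  define g where "g = (\<lambda>x. (x - B x v * u - B x u * v, (B x v, B x u)))"
  show "bij_betw (\<lambda>p. fst (snd p) * u + snd (snd p) * v + fst p) (W' \<times> (K \<times> K)) W"
  proof (rule bij_betwI[where g = g])
    show "(\<lambda>p. fst (snd p) * u + snd (snd p) * v + fst p) \<in> W' \<times> (K \<times> K) \<rightarrow> W"
      using subspD[OF W] u v unfolding W'_def by auto
    show "g \<in> W \<rightarrow> W' \<times> (K \<times> K)"
    proof
      fix x assume x: "x \<in> W"
      have "x - B x v * u - B x u * v \<in> W"
        using subsp_diff[OF W] subspD(3)[OF W BK] x u v by auto
      moreover have "B u (x - B x v * u - B x u * v) = 0"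
      proof -
        have "B u (x - B x v * u - B x u * v) = B u x - B x v * B u u - B x u * B u v"
          using B_lin2[OF BK, of u "x - B x v * u" x u v] B_lin2[OF BK, of u x x v u] by simp
        then show ?thesis using Buu Buv B_sym[of u x] by simp
      qed
      moreover have "B v (x - B x v * u - B x u * v) = 0"
      proof -
        have "B v (x - B x v * u - B x u * v) = B v x - B x v * B v u - B x u * B v v"
          using B_lin2[OF BK, of v "x - B x v * u" x u v] B_lin2[OF BK, of v x x v u] by simp
        then show ?thesis using Bvv Bvu B_sym[of v x] by simp
      qed
      ultimately show "g x \<in> W' \<times> (K \<times> K)" unfolding g_def W'_def using BK by auto
    qed
    show "(\<lambda>p. fst (snd p) * u + snd (snd p) * v + fst p) (g x) = x" for x unfolding g_def by simp
    fix p assume p: "p \<in> W' \<times> (K \<times> K)"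
    obtain w s t where pe: "p = (w, (s, t))" by (cases p) auto
    have w0: "B u w = 0" "B v w = 0" using p pe unfolding W'_def by auto
    have st: "s \<in> K" "t \<in> K" using p pe by auto
    have 1: "B (s * u + t * v + w) v = s"
      using B_add1 B_scale1[OF st(1)] B_scale1[OF st(2)] Buv Bvv w0 B_sym[of w v] by simp
    have 2: "B (s * u + t * v + w) u = t"
      using B_add1 B_scale1[OF st(1)] B_scale1[OF st(2)] Buu Bvu w0 B_sym[of w u] by simp
    show "g ((\<lambda>p. fst (snd p) * u + snd (snd p) * v + fst p) p) = p"
      unfolding g_def pe using 1 2 by simp
  qed
qed


lemma finite_all [simp]: "finite (A :: 'a set)" by simp

lemma N_hyp:
  assumes W: "subsp W" and u: "u \<in> W" and v: "v \<in> W" and Fu: "F u = 0" and Fv: "F v = 0"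
    and Buv: "B u v = 1" and aK: "a \<in> K"
  defines "W' \<equiv> {x \<in> {x \<in> W. B u x = 0}. B v x = 0}"
  shows "N W a = (card K - 1) * card W' + card K * N W' a"
    and "card W = card K * card K * card W'"
proof -
  note sp = split_hyp[OF W u v Fu Fv Buv, folded W'_def]
  show "card W = card K * card K * card W'"
    using bij_betw_same_card[OF sp(1)] by (simp add: card_cartesian_product mult_ac)
  have "N W a = card {p \<in> W' \<times> (K \<times> K). F (fst (snd p) * u + snd (snd p) * v + fst p) = a}"
    unfolding N_def by (rule card_bij_filter[OF sp(1)])
  also have "\<dots> = card {p \<in> W' \<times> (K \<times> K). F (fst p) + fst (snd p) * snd (snd p) = a}"
  proof (rule arg_cong[where f = card], rule Collect_cong)
    fix p :: "'a \<times> 'a \<times> 'a"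
    show "(p \<in> W' \<times> (K \<times> K) \<and> F (fst (snd p) * u + snd (snd p) * v + fst p) = a) =
      (p \<in> W' \<times> (K \<times> K) \<and> F (fst p) + fst (snd p) * snd (snd p) = a)"
    proof (cases "p \<in> W' \<times> (K \<times> K)")
      case True
      then have "F (fst (snd p) * u + snd (snd p) * v + fst p) = fst (snd p) * snd (snd p) + F (fst p)"
        by (intro sp(2)) (auto simp: mem_Times_iff)
      then show ?thesis by (simp add: add.commute)
    qed simp
  qed
  also have "\<dots> = (\<Sum>w\<in>W'. card {q \<in> K \<times> K. F w + fst q * snd q = a})"
    by (rule card_prod_filter) auto
  also have "\<dots> = (\<Sum>w\<in>W'. card {q \<in> K \<times> K. fst q * snd q = a - F w})"
    by (rule sum.cong) (auto intro!: arg_cong[where f = card] simp: algebra_simps)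
  also have "\<dots> = (\<Sum>w\<in>W'. (card K - 1) + (if F w = a then card K else 0))"
  proof (rule sum.cong)
    fix w assume "w \<in> W'"
    have "a - F w \<in> K \<Longrightarrow> card {q \<in> K \<times> K. fst q * snd q = a - F w} = (if a - F w = 0 then 2 * card K - 1 else card K - 1)"
      by (rule hyp_count)
    moreover have "a - F w \<in> K" using aK FK Kdiff by auto
    ultimately show "card {q \<in> K \<times> K. fst q * snd q = a - F w} = (card K - 1) + (if F w = a then card K else 0)"
      using card_K_ge by auto
  qed simp
  also have "\<dots> = (card K - 1) * card W' + (\<Sum>w\<in>W'. if F w = a then card K else 0)"
    by (simp add: sum.distrib)
  also have "(\<Sum>w\<in>W'. if F w = a then card K else 0) = (\<Sum>w\<in>{w \<in> W'. F w = a}. card K)"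
    by (rule sum.inter_filter[symmetric]) simp
  also have "\<dots> = card K * N W' a" unfolding N_def by simp
  finally show "N W a = (card K - 1) * card W' + card K * N W' a" .
qed

end


context qform begin

lemma N_split1:
  assumes W: "subsp W" and x0: "x0 \<in> W" and c: "F x0 \<noteq> 0"
  shows "N W d = (\<Sum>s\<in>K. N {x \<in> W. B x0 x = 0} (d - s^2 * F x0))"
    and "card W = card K * card {x \<in> W. B x0 x = 0}"
proof -
  note sp = split1[OF W x0 c]
  show "card W = card K * card {x \<in> W. B x0 x = 0}"
    using bij_betw_same_card[OF sp(1)] by (simp add: card_cartesian_product)
  have "N W d = card {p \<in> K \<times> {x \<in> W. B x0 x = 0}. F (fst p * x0 + snd p) = d}"
    unfolding N_def by (rule card_bij_filter[OF sp(1)])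
  also have "\<dots> = card {p \<in> K \<times> {x \<in> W. B x0 x = 0}. F (snd p) = d - (fst p)^2 * F x0}"
  proof (rule arg_cong[where f = card], rule Collect_cong)
    fix p :: "'a \<times> 'a"
    show "(p \<in> K \<times> {x \<in> W. B x0 x = 0} \<and> F (fst p * x0 + snd p) = d) =
      (p \<in> K \<times> {x \<in> W. B x0 x = 0} \<and> F (snd p) = d - (fst p)^2 * F x0)"
    proof (cases "p \<in> K \<times> {x \<in> W. B x0 x = 0}")
      case True
      then have "F (fst p * x0 + snd p) = (fst p)^2 * F x0 + F (snd p)"
        by (intro sp(2)) (auto simp: mem_Times_iff)
      then show ?thesis by (auto simp: algebra_simps)
    qed simp
  qed
  also have "\<dots> = (\<Sum>s\<in>K. card {w \<in> {x \<in> W. B x0 x = 0}. F w = d - s^2 * F x0})"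
    by (rule card_prod_filter) auto
  finally show "N W d = (\<Sum>s\<in>K. N {x \<in> W. B x0 x = 0} (d - s^2 * F x0))" unfolding N_def .
qed

lemma N_zero_form:
  assumes "\<forall>w\<in>W. F w = 0"
  shows "N W e = (if e = 0 then card W else 0)"
  unfolding N_def using assms by (auto intro: arg_cong[where f = card])

lemma sum_if_zero: "(\<Sum>s\<in>K. if (s::'a) = 0 then (m::nat) else 0) = m"
  using K0 by (simp add: sum.delta)

lemma qf_main:
  assumes "subsp W" "N W 0 * card K \<noteq> card W" "a \<in> K - {0}" "b \<in> K - {0}"
  shows "N W a = N W b"
  using assms
proof (induction "card W" arbitrary: W rule: less_induct)
  case less
  note W = less.prems(1)
  show ?case
  proof (cases "\<exists>u\<in>W. F u = 0 \<and> (\<exists>y\<in>W. B u y \<noteq> 0)")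
    case True
    then obtain u y where u: "u \<in> W" "F u = 0" and y: "y \<in> W" "B u y \<noteq> 0" by auto
    define i where "i = inverse (B u y)"
    have iK: "i \<in> K" unfolding i_def using Kinv BK by auto
    define v0 where "v0 = i * y"
    have v0W: "v0 \<in> W" unfolding v0_def using subspD(3)[OF W iK y(1)] .
    have Buv0: "B u v0 = 1" unfolding v0_def using B_scale2[OF iK, of u y] y(2) i_def by simp
    define v where "v = v0 - F v0 * u"
    have vW: "v \<in> W" unfolding v_def using subsp_diff[OF W v0W subspD(3)[OF W FK u(1)]] .
    have Buu: "B u u = 0" using B_self u(2) by simp
    have Buv: "B u v = 1" unfolding v_def using B_lin2[OF FK, of u v0 v0 u] Buv0 Buu by simp
    have Fv: "F v = 0"
    proof -
      have "F v = F v0 + F (- (F v0 * u)) + B v0 (- (F v0 * u))"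
        unfolding v_def using F_add[of v0 "- (F v0 * u)"] by simp
      also have "F (- (F v0 * u)) = 0" using F_neg Fscale[OF FK] u(2) by simp
      also have "B v0 (- (F v0 * u)) = - (F v0 * B v0 u)" using B_neg2 B_scale2[OF FK] by simp
      also have "B v0 u = 1" using Buv0 B_sym by metis
      finally show ?thesis by simp
    qed
    define W' where "W' = {x \<in> {x \<in> W. B u x = 0}. B v x = 0}"
    have sW': "subsp W'" unfolding W'_def using split_hyp[OF W u(1) vW u(2) Fv Buv] by simp
    have NW: "N W e = (card K - 1) * card W' + card K * N W' e" if "e \<in> K" for e
      unfolding W'_def by (rule N_hyp[OF W u(1) vW u(2) Fv Buv that])
    have cW: "card W = card K * card K * card W'"
      unfolding W'_def by (rule N_hyp[OF W u(1) vW u(2) Fv Buv K0])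
    have "card W' \<ge> 1" using subspD(1)[OF sW'] by (metis card_0_eq empty_iff finite_all less_one not_le)
    moreover have "1 < card K * card K"
    proof -
      have "3 * 1 \<le> card K * card K" using card_K_ge by (intro mult_le_mono) auto
      then show ?thesis by simp
    qed
    ultimately have "1 * card W' < (card K * card K) * card W'"
      by (intro mult_strict_right_mono) auto
    then have lt: "card W' < card W" using cW by simp
    have ne: "N W' 0 * card K \<noteq> card W'"
    proof
      assume h: "N W' 0 * card K = card W'"
      have "N W 0 * card K = ((card K - 1) * card W' + card K * N W' 0) * card K" using NW[OF K0] by simp
      also have "\<dots> = (card K - 1) * card K * card W' + card K * (N W' 0 * card K)"
        by (simp only: add_mult_distrib add_mult_distrib2 mult.assoc mult.commute mult.left_commute)
      also have "\<dots> = (card K - 1) * card K * card W' + card K * card W'" by (simp only: h)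
      also have "\<dots> = ((card K - 1) + 1) * card K * card W'" by (simp only: add_mult_distrib mult_1 mult.assoc)
      also have "(card K - 1) + 1 = card K" using card_K_ge by simp
      finally show False using less.prems(2) cW by simp
    qed
    have "N W' a = N W' b" using less.hyps[OF lt sW' ne less.prems(3,4)] .
    then show ?thesis using NW less.prems(3,4) by simp
  next
    case False
    then have H: "\<And>u y. u \<in> W \<Longrightarrow> F u = 0 \<Longrightarrow> y \<in> W \<Longrightarrow> B u y = 0" by auto
    show ?thesis
    proof (cases "\<forall>x\<in>W. F x = 0")
      case True
      then show ?thesis using N_zero_form[OF True] less.prems(3,4) by simp
    next
      case False
      then obtain x0 where x0: "x0 \<in> W" "F x0 \<noteq> 0" by auto
      define c where "c = F x0"
      define W1 where "W1 = {x \<in> W. B x0 x = 0}"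
      have sW1: "subsp W1" unfolding W1_def by (rule subsp_perp[OF W])
      have N1: "N W d = (\<Sum>s\<in>K. N W1 (d - s^2 * c))" for d
        unfolding W1_def c_def by (rule N_split1[OF W x0])
      have c1W: "card W = card K * card W1" unfolding W1_def by (rule N_split1[OF W x0])
      show ?thesis
      proof (cases "\<forall>w\<in>W1. F w = 0")
        case True
        have "N W 0 = (\<Sum>s\<in>K. if s = 0 then card W1 else 0)"
          unfolding N1 N_zero_form[OF True]
          by (rule sum.cong) (use x0(2) c_def in auto)
        then have "N W 0 = card W1" using sum_if_zero by simp
        then show ?thesis using less.prems(2) c1W by (simp add: mult.commute)
      next
        case False
        then obtain x1 where x1: "x1 \<in> W1" "F x1 \<noteq> 0" by auto
        define c1 where "c1 = F x1"
        define W2 where "W2 = {x \<in> W1. B x1 x = 0}"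
        have N2: "N W1 d = (\<Sum>s\<in>K. N W2 (d - s^2 * c1))" for d
          unfolding W2_def c1_def by (rule N_split1[OF sW1 x1])
        show ?thesis
        proof (cases "\<forall>w\<in>W2. F w = 0")
          case False
          then obtain x2 where x2: "x2 \<in> W2" "F x2 \<noteq> 0" by auto
          define c2 where "c2 = F x2"
          have cK: "c \<in> K - {0}" "c1 \<in> K - {0}" using x0 x1 FK c_def c1_def by auto
          obtain s t where st: "s \<in> K" "t \<in> K" "c * s^2 + c1 * t^2 = - c2"
            using pigeon[OF cK, of "- c2"] Kneg FK c2_def by auto
          have x2W1: "x2 \<in> W1" and Bx1x2: "B x1 x2 = 0" using x2 unfolding W2_def by auto
          have Bx0x2: "B x0 x2 = 0" using x2W1 unfolding W1_def by auto
          have x2W: "x2 \<in> W" using x2W1 unfolding W1_def by auto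
          have x1W: "x1 \<in> W" and Bx0x1: "B x0 x1 = 0" using x1 unfolding W1_def by auto
          have tw: "t * x1 + x2 \<in> W1" using subspD[OF sW1] x1(1) x2W1 st(2) by auto
          have Ftw: "F (t * x1 + x2) = t^2 * c1 + c2"
            using split1(2)[OF sW1 x1, of x2 t] Bx1x2 st(2) c1_def c2_def by simp
          have Fy: "F (s * x0 + (t * x1 + x2)) = s^2 * c + (t^2 * c1 + c2)"
            using split1(2)[OF W x0, of "t * x1 + x2" s] tw st(1) Ftw c_def unfolding W1_def by simp
          have "F (s * x0 + (t * x1 + x2)) = 0" using Fy st(3) by (simp add: algebra_simps)
          moreover have yW: "s * x0 + (t * x1 + x2) \<in> W"
            using subspD[OF W] x0(1) x1W x2W st by auto
          ultimately have "B (s * x0 + (t * x1 + x2)) x2 = 0" using H x2W by auto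
          moreover have "B (s * x0 + (t * x1 + x2)) x2 = 2 * c2"
            using B_add1 B_scale1[OF st(1)] B_scale1[OF st(2)] B_sym[of x0 x2] B_sym[of x1 x2]
              Bx0x2 Bx1x2 B_self c2_def by simp
          ultimately show ?thesis using x2(2) two c2_def by simp
        next
          case True
          have cK: "c \<in> K - {0}" "c1 \<in> K - {0}" using x0 x1 FK c_def c1_def by auto
          have key: "N W d = card W2 * G c c1 d" for d
          proof -
            have "N W d = (\<Sum>s\<in>K. \<Sum>t\<in>K. if d - s^2 * c - t^2 * c1 = 0 then card W2 else 0)"
              unfolding N1 N2 N_zero_form[OF True] by simp
            also have "\<dots> = (\<Sum>s\<in>K. card W2 * card {t \<in> K. c * s^2 + c1 * t^2 = d})"
            proof (rule sum.cong)
              fix s assume "s \<in> K"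
              have "(\<Sum>t\<in>K. if d - s^2 * c - t^2 * c1 = 0 then card W2 else 0)
                  = (\<Sum>t\<in>{t \<in> K. c * s^2 + c1 * t^2 = d}. card W2)"
                by (subst sum.inter_filter) (auto intro!: sum.cong simp: algebra_simps)
              then show "(\<Sum>t\<in>K. if d - s^2 * c - t^2 * c1 = 0 then card W2 else 0)
                  = card W2 * card {t \<in> K. c * s^2 + c1 * t^2 = d}" by simp
            qed simp
            also have "\<dots> = card W2 * (\<Sum>s\<in>K. card {t \<in> K. c * s^2 + c1 * t^2 = d})"
              by (simp add: sum_distrib_left)
            also have "(\<Sum>s\<in>K. card {t \<in> K. c * s^2 + c1 * t^2 = d}) = G c c1 d"
              unfolding G_def by (rule card_prod_filter[symmetric]) auto
            finally show ?thesis .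
          qed
          show ?thesis using key G_const[OF cK less.prems(3,4)] by simp
        qed
      qed
    qed
  qed
qed

end


lemma pow_card_same:
  fixes x :: "'a :: {finite,field}"
  shows "x ^ CARD('a) = x"
proof (cases "x = 0")
  case False
  have "x * (\<Prod>y\<in>UNIV-{0}. x * y) = x * x ^ (card (UNIV :: 'a set) - 1) * \<Prod>(UNIV-{0})"
    by (simp add: prod.distrib mult_ac)
  also have "x * x ^ (card (UNIV :: 'a set) - 1) = x ^ Suc (card (UNIV :: 'a set) - 1)"
    by (subst power_Suc) auto
  also have "Suc (card (UNIV :: 'a set) - 1) = card (UNIV :: 'a set)"
    using finite_UNIV_card_ge_0[where ?'a = 'a] by simp
  also have "(\<Prod>y\<in>UNIV-{0}. x * y) = (\<Prod>y\<in>UNIV-{0}. y)"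
    by (rule prod.reindex_bij_witness[of _ "\<lambda>y. y / x" "\<lambda>y. x * y"]) (use False in auto)
  finally show ?thesis
    by simp
qed (use finite_UNIV_card_ge_0[where ?'a = 'a] in auto)

lemma of_nat_card_zero: "of_nat CARD('a::{finite,field}) = (0::'a)"
proof -
  have "(\<Sum>x\<in>(UNIV::'a set). x + 1) = (\<Sum>x\<in>UNIV. x)"
    by (rule sum.reindex_bij_witness[of _ "\<lambda>x. x - 1" "\<lambda>x. x + 1"]) auto
  then have "(\<Sum>x\<in>(UNIV::'a set). x) + of_nat CARD('a) = (\<Sum>x\<in>UNIV. x)"
    by (simp add: sum.distrib)
  then show ?thesis by simp
qed

lemma roots_bound_gen:
  fixes P :: "'a::field poly"
  assumes "coeff P N \<noteq> 0" "degree P \<le> N"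
  shows "card {x. poly P x = 0} \<le> N"
proof -
  have "P \<noteq> 0" using assms by auto
  then show ?thesis using card_poly_roots_bound[of P] assms(2) by simp
qed

lemma trace_kernel_bound:
  fixes b n :: nat
  assumes "b \<ge> 2" "n \<ge> 1"
  shows "card {x::'a::field. (\<Sum>i<n. x ^ (b ^ i)) = 0} \<le> b ^ (n - 1)"
proof -
  define P :: "'a poly" where "P = (\<Sum>i<n. monom 1 (b ^ i))"
  have ev: "poly P x = (\<Sum>i<n. x ^ (b ^ i))" for x unfolding P_def by (simp add: poly_sum poly_monom)
  have inj: "b ^ i = b ^ j \<longleftrightarrow> i = j" for i j using assms(1) by (simp add: power_inject_exp)
  have "coeff P (b ^ (n - 1)) = (\<Sum>i<n. if b ^ i = b ^ (n - 1) then 1 else 0)"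
    unfolding P_def by (simp add: coeff_sum coeff_monom)
  also have "\<dots> = (\<Sum>i<n. if i = n - 1 then 1 else 0)" by (simp add: inj)
  also have "\<dots> = 1" using assms(2) by simp
  finally have c: "coeff P (b ^ (n - 1)) \<noteq> 0" by simp
  have "degree P \<le> b ^ (n - 1)"
  proof (rule degree_le, intro allI impI)
    fix j assume j: "b ^ (n - 1) < j"
    have "b ^ i \<noteq> j" if "i < n" for i
    proof -
      have "b ^ i \<le> b ^ (n - 1)" using that assms(1) by (intro power_increasing) auto
      then show ?thesis using j by simp
    qed
    then show "coeff P j = 0" unfolding P_def by (simp add: coeff_sum coeff_monom)
  qed
  from roots_bound_gen[OF c this] show ?thesis unfolding ev .
qed

lemma frob_roots_bound:
  fixes b :: nat
  assumes "b \<ge> 2"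
  shows "card {x::'a::field. x ^ b = x} \<le> b"
proof -
  define P :: "'a poly" where "P = monom 1 b - monom 1 1"
  have ev: "poly P x = 0 \<longleftrightarrow> x ^ b = x" for x unfolding P_def by (simp add: poly_monom)
  have c: "coeff P b \<noteq> 0" unfolding P_def using assms by (simp add: coeff_monom)
  have "degree P \<le> b" unfolding P_def
    by (rule degree_le) (use assms in \<open>auto simp: coeff_monom\<close>)
  from roots_bound_gen[OF c this] show ?thesis unfolding ev .
qed

lemma fibre_bound:
  fixes f :: "'a::ab_group_add \<Rightarrow> 'b::ab_group_add"
  assumes fin: "finite A" and cl: "\<And>x y. x \<in> A \<Longrightarrow> y \<in> A \<Longrightarrow> x - y \<in> A"
    and hom: "\<And>x y. x \<in> A \<Longrightarrow> y \<in> A \<Longrightarrow> f (x - y) = f x - f y"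
  shows "card A \<le> card {x \<in> A. f x = 0} * card (f ` A)"
proof -
  have e: "A = (\<Union>y\<in>f ` A. {x \<in> A. f x = y})" by auto
  have "card (\<Union>y\<in>f ` A. {x \<in> A. f x = y}) \<le> (\<Sum>y\<in>f ` A. card {x \<in> A. f x = y})"
    by (rule card_UN_le) (simp add: fin)
  then have "card A \<le> (\<Sum>y\<in>f ` A. card {x \<in> A. f x = y})" using e by simp
  also have "\<dots> \<le> (\<Sum>y\<in>f ` A. card {x \<in> A. f x = 0})"
  proof (rule sum_mono)
    fix y assume "y \<in> f ` A"
    then obtain x0 where x0: "x0 \<in> A" "f x0 = y" by auto
    have "inj_on (\<lambda>x. x - x0) {x \<in> A. f x = y}" by (auto intro: inj_onI)
    moreover have "(\<lambda>x. x - x0) ` {x \<in> A. f x = y} \<subseteq> {x \<in> A. f x = 0}"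
      using cl hom x0 by auto
    moreover have "finite {x \<in> A. f x = 0}" using fin by simp
    ultimately show "card {x \<in> A. f x = y} \<le> card {x \<in> A. f x = 0}"
      by (rule card_inj_on_le)
  qed
  also have "\<dots> = card {x \<in> A. f x = 0} * card (f ` A)" by simp
  finally show ?thesis .
qed

lemma sum_lessThan_add: "(\<Sum>i<(a::nat) + (b::nat). f i) = (\<Sum>i<a. f i) + (\<Sum>j<b. f (a + j))"
  by (induction b) (simp_all add: add.assoc)


locale conc =
  fixes q d n k m :: nat and c :: "nat \<Rightarrow> 'a::{finite,field}"
  assumes pc: "prime CHAR('a)" and qk: "q = CHAR('a) ^ k" and k1: "k \<ge> 1"
    and qodd: "odd q" and d1: "d \<ge> 1" and n1: "n \<ge> 1" and card: "CARD('a) = q ^ (d * n)"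
begin

definition "Q = q ^ d"
definition "Kc = {x::'a. x ^ Q = x}"
definition "L (x::'a) = linearized Q c m x"
definition "Tr (z::'a) = frob_trace Q n z"
definition "F x = Tr (x * L x)"
definition "T (z::'a) = frob_trace q d z"

lemma q_ge: "q \<ge> 3"
proof -
  have "CHAR('a) \<ge> 2" using pc prime_ge_2_nat by blast
  moreover have "CHAR('a) ^ 1 \<le> CHAR('a) ^ k" using k1 \<open>CHAR('a) \<ge> 2\<close> by (intro power_increasing) auto
  ultimately have "q \<ge> 2" unfolding qk by simp
  then show ?thesis using qodd by presburger
qed

lemma Q_ge: "Q \<ge> 3"
proof -
  have "q ^ 1 \<le> q ^ d" using d1 q_ge by (intro power_increasing) auto
  then show ?thesis unfolding Q_def using q_ge by simp
qed

lemma qpow: "q ^ i = CHAR('a) ^ (k * i)" unfolding qk by (simp add: power_mult)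
lemma Qpow: "Q ^ i = CHAR('a) ^ (k * (d * i))" unfolding Q_def by (simp add: qpow power_mult[symmetric] mult.assoc)

lemma add_q: "(x + y :: 'a) ^ (q ^ i) = x ^ (q ^ i) + y ^ (q ^ i)"
  by (rule freshmans_dream'[OF pc qpow])
lemma add_Q: "(x + y :: 'a) ^ (Q ^ i) = x ^ (Q ^ i) + y ^ (Q ^ i)"
  by (rule freshmans_dream'[OF pc Qpow])
lemma sum_q: "(sum f A :: 'a) ^ (q ^ i) = (\<Sum>j\<in>A. f j ^ (q ^ i))"
  by (rule freshmans_dream_sum'[OF pc qpow])
lemma sum_Q: "(sum f A :: 'a) ^ (Q ^ i) = (\<Sum>j\<in>A. f j ^ (Q ^ i))"
  by (rule freshmans_dream_sum'[OF pc Qpow])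
lemma odd_Q: "odd (Q ^ i)" unfolding Q_def using qodd by (simp add: power_mult[symmetric])
lemma neg_Q: "(- x :: 'a) ^ (Q ^ i) = - (x ^ (Q ^ i))" using odd_Q by simp

lemma cardQ: "CARD('a) = Q ^ n" unfolding Q_def card by (simp add: power_mult)

lemma pow_Qn: "(x::'a) ^ (Q ^ n) = x" using pow_card_same[of x] cardQ by simp

lemma Kc_pow: "t \<in> Kc \<Longrightarrow> t ^ (Q ^ i) = t"
proof (induction i)
  case (Suc i)
  have "t ^ (Q ^ Suc i) = (t ^ (Q ^ i)) ^ Q" by (simp add: power_mult[symmetric] mult.commute)
  then show ?case using Suc unfolding Kc_def by simp
qed simp

lemma two_ne: "(2::'a) \<noteq> 0"
proof
  assume "(2::'a) = 0"
  then have "of_nat 2 = (0::'a)" by simp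
  then have "CHAR('a) dvd 2" by (simp only: of_nat_eq_0_iff_char_dvd)
  then have "CHAR('a) \<le> 2" by (rule dvd_imp_le) simp
  moreover have "CHAR('a) \<ge> 2" using pc prime_ge_2_nat by blast
  ultimately have "CHAR('a) = 2" by simp
  then have "even q" unfolding qk using k1 by simp
  then show False using qodd by simp
qed


lemma Q1: "Q ^ 1 = Q" by simp

lemma Kc_kfield: "kfield Kc"
proof
  show "0 \<in> Kc" unfolding Kc_def using Q_ge by simp
  show "1 \<in> Kc" unfolding Kc_def by simp
  show "a + b \<in> Kc" if "a \<in> Kc" "b \<in> Kc" for a b
    using that add_Q[of a b 1] unfolding Kc_def by simp
  show "a * b \<in> Kc" if "a \<in> Kc" "b \<in> Kc" for a b
    using that unfolding Kc_def by (simp add: power_mult_distrib)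
  show "- a \<in> Kc" if "a \<in> Kc" for a
    using that neg_Q[of a 1] unfolding Kc_def by simp
  show "inverse a \<in> Kc" if "a \<in> Kc" for a
    using that unfolding Kc_def by (simp add: power_inverse)
  show "(2::'a) \<noteq> 0" by (rule two_ne)
qed

lemma Tr_add: "Tr (x + y) = Tr x + Tr y"
  unfolding Tr_def frob_trace_def by (simp only: add_Q sum.distrib)

lemma Tr_scale: "t \<in> Kc \<Longrightarrow> Tr (t * z) = t * Tr z"
  unfolding Tr_def frob_trace_def by (simp add: power_mult_distrib Kc_pow sum_distrib_left)

lemma shift_sum:
  fixes f :: "nat \<Rightarrow> 'b::ab_group_add"
  assumes "f N = f 0"
  shows "(\<Sum>i<N. f (Suc i)) = (\<Sum>i<N. f i)"
proof -
  have "(\<Sum>i<Suc N. f i) = f 0 + (\<Sum>i<N. f (Suc i))" by (rule sum.lessThan_Suc_shift)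
  moreover have "(\<Sum>i<Suc N. f i) = (\<Sum>i<N. f i) + f N" by simp
  ultimately show ?thesis using assms by (simp add: add.commute)
qed

lemma Tr_K: "Tr z \<in> Kc"
proof -
  have "(Tr z) ^ Q = (\<Sum>i<n. (z ^ (Q ^ i)) ^ (Q ^ 1))"
    unfolding Tr_def frob_trace_def using sum_Q[of "\<lambda>i. z ^ (Q ^ i)" "{..<n}" 1] by simp
  also have "\<dots> = (\<Sum>i<n. z ^ (Q ^ Suc i))" by (simp add: power_mult[symmetric] mult.commute)
  also have "\<dots> = (\<Sum>i<n. z ^ (Q ^ i))" by (rule shift_sum) (simp add: pow_Qn)
  finally show ?thesis unfolding Kc_def Tr_def frob_trace_def by simp
qed

lemma L_add: "L (x + y) = L x + L y"
  unfolding L_def linearized_def by (simp add: add_Q sum.distrib distrib_left)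

lemma L_scale: "t \<in> Kc \<Longrightarrow> L (t * x) = t * L x"
  unfolding L_def linearized_def by (simp add: power_mult_distrib Kc_pow sum_distrib_left mult.left_commute)

lemma F_B: "F (x + y) - F x - F y = Tr (x * L y + y * L x)"
proof -
  have "(x + y) * L (x + y) = x * L x + y * L y + (x * L y + y * L x)"
    by (simp add: L_add algebra_simps)
  then have "F (x + y) = F x + F y + Tr (x * L y + y * L x)" unfolding F_def by (simp add: Tr_add)
  then show ?thesis by simp
qed

lemma F_qform: "qform Kc F"
proof -
  interpret kfield Kc by (rule Kc_kfield)
  show ?thesis
  proof
    show "F x \<in> Kc" for x unfolding F_def by (rule Tr_K)
    show "F (t * x) = t^2 * F x" if "t \<in> Kc" for t x
    proof -
      have eq: "t * x * L (t * x) = t * (t * (x * L x))" by (subst L_scale[OF that]) (simp add: mult_ac)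
      have "F (t * x) = Tr (t * (t * (x * L x)))" unfolding F_def using eq by (simp only:)
      also have "\<dots> = t * (t * F x)" unfolding F_def using Tr_scale[OF that] by simp
      finally show ?thesis by (simp add: power2_eq_square)
    qed
    show "F (x + y + z) - F (x + y) - F z = (F (x + z) - F x - F z) + (F (y + z) - F y - F z)" for x y z
      unfolding F_B by (simp add: L_add Tr_add[symmetric] algebra_simps)
    show "F (t * x + y) - F (t * x) - F y = t * (F (x + y) - F x - F y)" if "t \<in> Kc" for t x y
      unfolding F_B using that by (simp add: L_scale Tr_scale[symmetric] algebra_simps)
  qed
qed

end


lemma sum_grid:
  fixes g :: "nat \<Rightarrow> 'b::comm_monoid_add"
  shows "(\<Sum>l<d * n. g l) = (\<Sum>j<d. \<Sum>i<n. g (d * i + j))"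
proof (induction n)
  case (Suc n)
  have "(\<Sum>l<d * Suc n. g l) = (\<Sum>l<d * n + d. g l)" by (simp add: add.commute)
  also have "\<dots> = (\<Sum>l<d * n. g l) + (\<Sum>j<d. g (d * n + j))" by (rule sum_lessThan_add)
  also have "\<dots> = (\<Sum>j<d. \<Sum>i<Suc n. g (d * i + j))" using Suc by (simp add: sum.distrib)
  finally show ?case .
qed simp

context conc begin

interpretation kf: kfield Kc by (rule Kc_kfield)
interpretation qf: qform Kc F by (rule F_qform)

lemma Tr_diff: "Tr (x - y) = Tr x - Tr y"
  using Tr_add[of "x - y" y] by simp

lemma T_add: "T (x + y) = T x + T y"
  unfolding T_def frob_trace_def by (simp only: add_q sum.distrib)

lemma T_diff: "T (x - y) = T x - T y"
  using T_add[of "x - y" y] by simp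

lemma card_Kc: "card Kc = Q"
proof (rule antisym)
  show "card Kc \<le> Q" unfolding Kc_def by (rule frob_roots_bound) (use Q_ge in simp)
  have a: "card (UNIV::'a set) \<le> card {x \<in> UNIV. Tr x = 0} * card (Tr ` UNIV)"
    by (rule fibre_bound) (auto simp: Tr_diff)
  have b: "card {x \<in> UNIV. Tr x = 0} \<le> Q ^ (n - 1)"
    unfolding Tr_def frob_trace_def using trace_kernel_bound[of Q n] Q_ge n1 by simp
  have c: "card (Tr ` UNIV) \<le> card Kc" by (rule card_mono) (auto simp: Tr_K)
  have "card {x \<in> UNIV. Tr x = 0} * card (Tr ` UNIV) \<le> Q ^ (n - 1) * card Kc"
    using b c by (rule mult_le_mono)
  with a have "Q ^ n \<le> Q ^ (n - 1) * card Kc" using cardQ by simp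
  moreover have "Q ^ n = Q ^ (n - 1) * Q" using n1 by (cases n) auto
  ultimately have "Q ^ (n - 1) * Q \<le> Q ^ (n - 1) * card Kc" by simp
  then show "Q \<le> card Kc" using Q_ge by simp
qed

definition "H = {z \<in> Kc. T z = 0}"

lemma T_range: "z \<in> Kc \<Longrightarrow> (T z) ^ q = T z"
proof -
  assume z: "z \<in> Kc"
  have "(T z) ^ q = (\<Sum>j<d. (z ^ (q ^ j)) ^ (q ^ 1))"
    unfolding T_def frob_trace_def using sum_q[of "\<lambda>j. z ^ (q ^ j)" "{..<d}" 1] by simp
  also have "\<dots> = (\<Sum>j<d. z ^ (q ^ Suc j))" by (simp add: power_mult[symmetric] mult.commute)
  also have "\<dots> = (\<Sum>j<d. z ^ (q ^ j))"
    by (rule shift_sum[of "\<lambda>j. z ^ (q ^ j)" d]) (use z in \<open>simp add: Kc_def Q_def\<close>)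
  finally show ?thesis unfolding T_def frob_trace_def .
qed

lemma card_H: "card H = q ^ (d - 1)"
proof (rule antisym)
  have "card H \<le> card {z::'a. T z = 0}" unfolding H_def by (rule card_mono) auto
  also have "\<dots> \<le> q ^ (d - 1)"
    unfolding T_def frob_trace_def using trace_kernel_bound[of q d] q_ge d1 by simp
  finally show "card H \<le> q ^ (d - 1)" .
  have a: "card Kc \<le> card {z \<in> Kc. T z = 0} * card (T ` Kc)"
    by (rule fibre_bound) (auto simp: T_diff kf.Kdiff)
  have b: "card (T ` Kc) \<le> card {y::'a. y ^ q = y}" by (rule card_mono) (auto simp: T_range)
  have c: "card {y::'a. y ^ q = y} \<le> q" by (rule frob_roots_bound) (use q_ge in simp)
  have "card {z \<in> Kc. T z = 0} * card (T ` Kc) \<le> card H * q"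
    unfolding H_def using b c by (intro mult_le_mono) auto
  with a have "Q \<le> card H * q" unfolding card_Kc by simp
  moreover have "Q = q ^ (d - 1) * q" unfolding Q_def using d1 by (cases d) auto
  ultimately have "q ^ (d - 1) * q \<le> card H * q" by simp
  then show "q ^ (d - 1) \<le> card H" using q_ge by simp
qed

lemma comp: "frob_trace q (d * n) z = T (Tr z)"
proof -
  have "T (Tr z) = (\<Sum>j<d. \<Sum>i<n. (z ^ (Q ^ i)) ^ (q ^ j))"
    unfolding T_def Tr_def frob_trace_def by (simp add: sum_q)
  also have "\<dots> = (\<Sum>j<d. \<Sum>i<n. z ^ (q ^ (d * i + j)))"
    by (simp add: power_mult[symmetric] Q_def power_add)
  also have "\<dots> = (\<Sum>l<d * n. z ^ (q ^ l))" by (rule sum_grid[symmetric])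
  finally show ?thesis unfolding frob_trace_def by simp
qed

end


lemma card_preimage_sum:
  fixes F :: "'a::finite \<Rightarrow> 'b"
  assumes "finite S"
  shows "card {x. F x \<in> S} = (\<Sum>a\<in>S. card {x. F x = a})"
proof -
  have "{x. F x \<in> S} = (\<Union>a\<in>S. {x. F x = a})" by auto
  moreover have "card (\<Union>a\<in>S. {x. F x = a}) = (\<Sum>a\<in>S. card {x. F x = a})"
    by (rule card_UN_disjoint) (use assms in auto)
  ultimately show ?thesis by simp
qed

context conc begin

interpretation kf: kfield Kc by (rule Kc_kfield)
interpretation qf: qform Kc F by (rule F_qform)

lemma final:
  fixes lama lama' :: int and w w' :: nat
  assumes lam: "lama \<in> {-1, 0, 1}"
    and lam_count: "real (card {x::'a. F x = 0})
        = real Q ^ (n - 1) + of_int lama * (real Q - 1) * real Q powr (real (n + w) / 2 - 1)"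
    and lam': "lama' \<in> {-1, 0, 1}"
    and lam'_count: "real (card {x::'a. T (F x) = 0})
        = real q ^ (d * n - 1) + of_int lama' * (real q - 1) * real q powr (real (d * n + w') / 2 - 1)"
    and lam_nz: "lama \<noteq> 0"
  shows "lama' = lama"
proof -
  define N0 where "N0 = card {x::'a. F x = 0}"
  define C where "C = card {x::'a. F x = 1}"
  define P where "P = real Q powr (real (n + w) / 2 - 1)"
  define P' where "P' = real q powr (real (d * n + w') / 2 - 1)"
  have Ppos: "P > 0" "P' > 0" unfolding P_def P'_def using Q_ge q_ge by auto
  have Qr: "real Q ^ n = real Q ^ (n - 1) * real Q" using n1 by (cases n) auto
  have hpos: "real (q ^ (d - 1)) > 0" using q_ge by simp
  have Qq: "real Q = real q * real (q ^ (d - 1))" unfolding Q_def using d1 by (cases d) auto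
  have Q1: "real Q - 1 > 0" using Q_ge by simp
  have lam_r: "of_int lama = (1::real) \<or> of_int lama = (-1::real)" using lam lam_nz by auto
  have N0r: "real N0 = real Q ^ (n - 1) + of_int lama * (real Q - 1) * P"
    using lam_count unfolding N0_def P_def by simp
  have ne: "N0 * card Kc \<noteq> card (UNIV::'a set)"
  proof
    assume "N0 * card Kc = card (UNIV::'a set)"
    then have "real N0 * real Q = real Q ^ n" unfolding card_Kc cardQ by (metis of_nat_mult of_nat_power)
    then have "real N0 = real Q ^ (n - 1)" using Qr Q_ge by simp
    then have "of_int lama * (real Q - 1) * P = 0" using N0r by simp
    then show False using lam_r Q1 Ppos by auto
  qed
  have subU: "qf.subsp UNIV" unfolding qf.subsp_def by simp
  have NN: "qf.N UNIV a = card {x::'a. F x = a}" for a unfolding qf.N_def by simp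
  have const: "card {x::'a. F x = a} = C" if "a \<in> Kc - {0}" for a
  proof -
    have "qf.N UNIV a = qf.N UNIV 1"
      by (rule qf.qf_main[OF subU _ that]) (use ne kf.K1 in \<open>auto simp: NN N0_def\<close>)
    then show ?thesis unfolding NN C_def .
  qed
  have sumS: "(\<Sum>a\<in>S. card {x::'a. F x = a}) = N0 + (card S - 1) * C" if "0 \<in> S" "S \<subseteq> Kc" for S
  proof -
    have "(\<Sum>a\<in>S. card {x::'a. F x = a}) = card {x::'a. F x = 0} + (\<Sum>a\<in>S - {0}. card {x::'a. F x = a})"
      using that by (simp add: sum.remove)
    also have "(\<Sum>a\<in>S - {0}. card {x::'a. F x = a}) = (\<Sum>a\<in>S - {0}. C)"
      by (rule sum.cong) (use that const in auto)
    finally show ?thesis unfolding N0_def using that by (simp add: card_Diff_singleton)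
  qed
  have S1: "card (UNIV::'a set) = N0 + (card Kc - 1) * C"
  proof -
    have "card (UNIV::'a set) = card {x::'a. F x \<in> Kc}" using qf.FK by simp
    also have "\<dots> = (\<Sum>a\<in>Kc. card {x::'a. F x = a})" by (rule card_preimage_sum) simp
    finally show ?thesis using sumS[of Kc] kf.K0 by simp
  qed
  have H0: "0 \<in> H" "H \<subseteq> Kc" unfolding H_def T_def frob_trace_def using kf.K0 d1 q_ge by (auto simp: power_0_left)
  have S2: "card {x::'a. T (F x) = 0} = N0 + (card H - 1) * C"
  proof -
    have "{x::'a. T (F x) = 0} = {x. F x \<in> H}" unfolding H_def using qf.FK by auto
    then have "card {x::'a. T (F x) = 0} = (\<Sum>a\<in>H. card {x::'a. F x = a})"
      using card_preimage_sum[of H F] by simp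
    then show ?thesis using sumS[OF H0] by simp
  qed
  have E1: "real N0 + (real Q - 1) * real C = real Q ^ n"
  proof -
    have "real (card (UNIV::'a set)) = real Q ^ n" unfolding cardQ by simp
    moreover have "real (card Kc - 1) = real Q - 1" unfolding card_Kc using Q_ge by simp
    ultimately show ?thesis using S1 by (metis of_nat_add of_nat_mult)
  qed
  have E2: "real (card {x::'a. T (F x) = 0}) = real N0 + (real (q ^ (d - 1)) - 1) * real C"
  proof -
    have "real (card H - 1) = real (q ^ (d - 1)) - 1" unfolding card_H using q_ge by simp
    then show ?thesis using S2 by (metis of_nat_add of_nat_mult)
  qed
  define h where "h = real (q ^ (d - 1))"
  define Qr where "Qr = real Q"
  define qr where "qr = real q"
  define A where "A = Qr ^ (n - 1)"
  have Cr: "real C = A - of_int lama * P"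
  proof -
    have "(Qr - 1) * real C = (Qr - 1) * (A - of_int lama * P)"
      using E1 N0r Qr unfolding Qr_def A_def by (simp add: algebra_simps)
    then show ?thesis using Q1 unfolding Qr_def by simp
  qed
  have qA: "qr ^ (d * n - 1) = h * A"
  proof -
    have "qr * qr ^ (d * n - 1) = qr ^ (d * n)"
      using d1 n1 by (metis Suc_diff_1 mult_pos_pos less_le_trans zero_less_one power_Suc)
    also have "\<dots> = Qr ^ n" unfolding qr_def Qr_def Q_def by (simp add: power_mult)
    also have "\<dots> = qr * (h * A)" using Qr Qq unfolding Qr_def qr_def h_def A_def by simp
    finally show ?thesis using q_ge unfolding qr_def by simp
  qed
  have key: "of_int lama' * (qr - 1) * P' = of_int lama * P * h * (qr - 1)"
  proof -
    have "qr ^ (d * n - 1) + of_int lama' * (qr - 1) * P' = real N0 + (h - 1) * real C"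
      using lam'_count E2 unfolding qr_def h_def P'_def by simp
    also have "\<dots> = A + of_int lama * (Qr - 1) * P + (h - 1) * (A - of_int lama * P)"
      using N0r Cr unfolding Qr_def A_def by simp
    also have "Qr = qr * h" using Qq unfolding Qr_def qr_def h_def by simp
    finally show ?thesis using qA by (simp add: algebra_simps)
  qed
  have q1: "qr - 1 > 0" using q_ge unfolding qr_def by simp
  have key2: "of_int lama' * P' = of_int lama * (P * h)"
    using key q1 by (simp add: mult.commute mult.left_commute)
  have Ph: "P * h > 0" using Ppos hpos unfolding h_def by simp
  show ?thesis
    using lam lam' lam_nz key2 Ph Ppos by auto
qed

end


theorem mainTheorem2:
  fixes q d n m :: nat and c :: "nat \<Rightarrow> 'a::{finite,field}"
    and w w' :: nat and lama lama' :: int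
  assumes q_pp: "prime_power q" and q_odd: "odd q"
    and d_pos: "d \<ge> 1" and n_pos: "n \<ge> 1"
    and card_field: "CARD('a) = q ^ (d * n)"
    and w_def: "card (qf_radical (\<lambda>x::'a. frob_trace (q ^ d) n (x * linearized (q ^ d) c m x)))
                 = (q ^ d) ^ w"
    and w'_def: "card (qf_radical (\<lambda>x::'a. frob_trace q (d * n) (x * linearized (q ^ d) c m x)))
                 = q ^ w'"
    and lam: "lama \<in> {-1, 0, 1}"
    and lam_count: "real (card {x::'a. frob_trace (q ^ d) n (x * linearized (q ^ d) c m x) = 0})
        = real (q ^ d) ^ (n - 1)
          + of_int lama * (real (q ^ d) - 1) * real (q ^ d) powr (real (n + w) / 2 - 1)"
    and lam': "lama' \<in> {-1, 0, 1}"
    and lam'_count: "real (card {x::'a. frob_trace q (d * n) (x * linearized (q ^ d) c m x) = 0})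
        = real q ^ (d * n - 1)
          + of_int lama' * (real q - 1) * real q powr (real (d * n + w') / 2 - 1)"
    and lam_nz: "lama \<noteq> 0"
  shows "lama' = lama"
proof -
  obtain p k where pk: "prime p" "k \<ge> 1" "q = p ^ k" using q_pp unfolding prime_power_def by auto
  have cpos: "CHAR('a) > 0" by (rule finite_imp_CHAR_pos) simp
  have pc: "prime CHAR('a)" by (rule prime_CHAR_semidom[OF cpos])
  have "of_nat CARD('a) = (0::'a)" by (rule of_nat_card_zero)
  then have "CHAR('a) dvd CARD('a)" by (simp only: of_nat_eq_0_iff_char_dvd)
  then have "CHAR('a) dvd p ^ (k * (d * n))" unfolding card_field pk(3) by (simp add: power_mult)
  then have "CHAR('a) dvd p" using pc prime_dvd_power by blast
  then have cp: "CHAR('a) = p" using primes_dvd_imp_eq[OF pc pk(1)] by simp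
  interpret cc: conc q d n k m c
    by standard (use pc pk cp q_odd d_pos n_pos card_field in auto)
  have e1: "frob_trace (q ^ d) n (x * linearized (q ^ d) c m x) = cc.F x" for x
    unfolding cc.F_def cc.Tr_def cc.L_def cc.Q_def ..
  have e2: "frob_trace q (d * n) (x * linearized (q ^ d) c m x) = cc.T (cc.F x)" for x
    unfolding cc.comp cc.F_def cc.Tr_def cc.L_def cc.Q_def ..
  show ?thesis
  proof (rule cc.final[OF lam _ lam' _ lam_nz])
    show "real (card {x::'a. cc.F x = 0}) = real cc.Q ^ (n - 1)
        + of_int lama * (real cc.Q - 1) * real cc.Q powr (real (n + w) / 2 - 1)"
      using lam_count unfolding e1 cc.Q_def .
    show "real (card {x::'a. cc.T (cc.F x) = 0}) = real q ^ (d * n - 1)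
        + of_int lama' * (real q - 1) * real q powr (real (d * n + w') / 2 - 1)"
      using lam'_count unfolding e2 .
  qed
qed


end
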